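(* Assume $N\ge2$, $p>1$ and $M>-\mu^*(1)$. Then for real numbers $0<a<b$ there exists no positive solution $u$ of (E) on $(a,b)$ such that $u(r)\to\infty$ as $r\to a$.
   Context: (E) denotes the ODE $-u_{rr}-\frac{N-1}{r}u_r=|u|^{p-1}u+M|u_r|^{\frac{2p}{p+1}}$ for $r>0$. $\mu^*(1)=(p+1)\left(\frac{p+1}{2p}\right)^{\frac{p}{p+1}}$. *)

theory Defs
  imports "HOL-Analysis.Analysis"
begin

definition mu_star1 :: "real \<Rightarrow> real" where
  "mu_star1 p = (p + 1) * ((p + 1) / (2 * p)) powr (p / (p + 1))"

definition solves_E_on :: "nat \<Rightarrow> real \<Rightarrow> real \<Rightarrow> (real \<Rightarrow> real) \<Rightarrow> real \<Rightarrow> real \<Rightarrow> bool" where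
  "solves_E_on N p M u a b \<longleftrightarrow>
     (\<exists>u' u''. \<forall>r\<in>{a<..<b}.
        (u has_real_derivative u' r) (at r) \<and>
        (u' has_real_derivative u'' r) (at r) \<and>
        - u'' r - (real N - 1) / r * u' r
          = \<bar>u r\<bar> powr (p - 1) * u r + M * \<bar>u' r\<bar> powr (2 * p / (p + 1)))"

end

theory Submission
  imports Defs
begin

lemma young_mu:
  fixes p t :: real
  assumes "p > 1" "t \<ge> 0"
  shows "mu_star1 p * t powr (p/(p+1)) \<le> 1 + (p+1)/2 * t"
proof (cases "t = 0")
  case True then show ?thesis using assms by simp
next
  case False
  define c where "c = (p+1)/(2*p)"
  define th where "th = p/(p+1)"
  have c: "c > 0" using assms by (simp add: c_def)
  have "(c*t) powr th * 1 powr (1/(p+1)) \<le> th*(c*t) + (1/(p+1))*1"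
    by (rule Youngs_inequality_0) (use assms c False in \<open>auto simp: field_simps th_def\<close>)
  moreover have "th*(c*t) = t/2" using assms by (simp add: th_def c_def)
  ultimately have "c powr th * t powr th \<le> t/2 + 1/(p+1)"
    using assms c by (simp add: powr_mult)
  hence "(p+1) * (c powr th * t powr th) \<le> (p+1) * (t/2 + 1/(p+1))"
    using assms by (intro mult_left_mono) auto
  moreover have "(p+1) * (t/2 + 1/(p+1)) = 1 + (p+1)/2 * t" using assms by (simp add: field_simps)
  moreover have "mu_star1 p = (p+1) * c powr th" by (simp add: mu_star1_def c_def th_def)
  ultimately show ?thesis by (simp add: th_def mult.assoc)
qed

lemma abs_powr_q:
  fixes p z :: real
  assumes "p > 1"
  shows "\<bar>z\<bar> powr (2*p/(p+1)) = (z^2) powr (p/(p+1))"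
proof -
  have "(z^2) powr (p/(p+1)) = (\<bar>z\<bar> powr 2) powr (p/(p+1))"
    by (cases "z = 0") (simp_all add: powr_numeral)
  also have "\<dots> = \<bar>z\<bar> powr (2*(p/(p+1)))" by (rule powr_powr)
  finally show ?thesis by (simp add: times_divide_eq_right)
qed

lemma right_unbounded:
  fixes u :: "real \<Rightarrow> real"
  assumes "filterlim u at_top (at_right a)" "a < c"
  shows "\<exists>s. a < s \<and> s < c \<and> u s > X"
proof -
  have "eventually (\<lambda>x. X < u x) (at_right a)"
    using assms(1) filterlim_at_top_dense by blast
  then obtain b where b: "b > a" "\<And>y. y > a \<Longrightarrow> y < b \<Longrightarrow> X < u y"
    unfolding eventually_at_right_field by blast
  define s where "s = (a + min b c)/2"
  show ?thesis using b assms(2) by (intro exI[of _ s]) (auto simp: s_def)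
qed

lemma cont_from_deriv:
  fixes f :: "real \<Rightarrow> real"
  shows "(\<And>x. x \<in> {s..t} \<Longrightarrow> (f has_real_derivative f' x) (at x)) \<Longrightarrow> continuous_on {s..t} f"
  by (meson DERIV_isCont continuous_at_imp_continuous_on)

theorem proposition4p8:
  fixes N :: nat and p M a b :: real
  assumes "N \<ge> 2" and "p > 1" and "M > - mu_star1 p"
    and "0 < a" and "a < b"
  shows "\<not> (\<exists>u. solves_E_on N p M u a b \<and> (\<forall>r\<in>{a<..<b}. u r > 0)
               \<and> filterlim u at_top (at_right a))"
proof
  assume "\<exists>u. solves_E_on N p M u a b \<and> (\<forall>r\<in>{a<..<b}. u r > 0)
               \<and> filterlim u at_top (at_right a)"
  then obtain u where sol: "solves_E_on N p M u a b" and pos: "\<And>r. r\<in>{a<..<b} \<Longrightarrow> u r > 0"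
    and lim: "filterlim u at_top (at_right a)" by blast
  from sol obtain u' u'' where D: "\<And>r. r \<in> {a<..<b} \<Longrightarrow>
        (u has_real_derivative u' r) (at r) \<and>
        (u' has_real_derivative u'' r) (at r) \<and>
        - u'' r - (real N - 1) / r * u' r
          = \<bar>u r\<bar> powr (p - 1) * u r + M * \<bar>u' r\<bar> powr (2 * p / (p + 1))"
    unfolding solves_E_on_def by blast
  define \<beta> where "\<beta> = (p+1)/2"
  define \<gamma> where "\<gamma> = (p-1)/2"
  define q where "q = 2 * p / (p + 1)"
  have \<beta>1: "\<beta> > 1" and \<gamma>0: "\<gamma> > 0" using assms by (auto simp: \<beta>_def \<gamma>_def)
  define ms where "ms = mu_star1 p"
  have ms_pos: "ms > 0" using assms by (simp add: ms_def mu_star1_def)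
  define m where "m = max 0 (-M)"
  have m0: "m \<ge> 0" and mms: "m < ms" using assms ms_pos by (auto simp: m_def ms_def)
  define \<delta> where "\<delta> = 1 - m / ms"
  have \<delta>0: "\<delta> > 0" using mms ms_pos by (simp add: \<delta>_def)
  have key: "-1 - M * \<bar>z\<bar> powr q - \<beta>*z^2 \<le> -\<delta>*(1+\<beta>*z^2)" for z :: real
  proof -
    have y: "ms * \<bar>z\<bar> powr q \<le> 1 + \<beta>*z^2"
      using young_mu[OF assms(2), of "z^2"] abs_powr_q[OF assms(2), of z]
      by (simp add: ms_def q_def \<beta>_def)
    have "- M * \<bar>z\<bar> powr q \<le> m * \<bar>z\<bar> powr q"
      by (intro mult_right_mono) (auto simp: m_def)
    also have "\<dots> = (m/ms) * (ms * \<bar>z\<bar> powr q)" using ms_pos by simp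
    also have "\<dots> \<le> (m/ms) * (1 + \<beta>*z^2)"
      using y m0 ms_pos by (intro mult_left_mono) auto
    finally have "- M * \<bar>z\<bar> powr q \<le> (m/ms) * (1 + \<beta>*z^2)" .
    then show ?thesis by (simp add: \<delta>_def algebra_simps)
  qed
  define C where "C = (real N - 1)/a"
  have C0: "C \<ge> 0" using assms by (simp add: C_def)
  define K where "K = 2*C/\<delta> + 1"
  have "0 \<le> 2*C/\<delta>" using C0 \<delta>0 by simp
  hence K0: "K > 0" by (simp add: K_def)
  define U0 where "U0 = K powr (1/\<gamma>)"
  have "eventually (\<lambda>r. U0 < u r) (at_right a)"
    using lim filterlim_at_top_dense by blast
  then obtain r0 where r0: "r0 > a" "\<And>y. y > a \<Longrightarrow> y < r0 \<Longrightarrow> U0 < u y"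
    unfolding eventually_at_right_field by blast
  define r1 where "r1 = min r0 b"
  have r1: "a < r1" "r1 \<le> b" using r0 assms by (auto simp: r1_def)
  have big: "u r powr \<gamma> \<ge> K" if "a < r" "r < r1" for r
  proof -
    have "U0 powr \<gamma> \<le> u r powr \<gamma>"
      using r0(2)[of r] that \<gamma>0 by (intro powr_mono2) (auto simp: r1_def U0_def)
    moreover have "U0 powr \<gamma> = K" using K0 \<gamma>0 by (simp add: U0_def powr_powr)
    ultimately show ?thesis by simp
  qed
  define z where "z r = u' r * u r powr (-\<beta>)" for r
  define z' where "z' r = u'' r * u r powr (-\<beta>) + u' r * (-\<beta> * u r powr (-\<beta>-1) * u' r)" for r
  have zder: "(z has_real_derivative z' r) (at r)" if "r\<in>{a<..<b}" for r
  proof -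
    have d2: "((\<lambda>r. u r powr (-\<beta>)) has_real_derivative (-\<beta> * u r powr (-\<beta>-1) * u' r)) (at r)"
      using DERIV_fun_powr[of u "u' r" r "-\<beta>"] D[OF that] pos[OF that] by simp
    have d1: "(u' has_real_derivative u'' r) (at r)" using D[OF that] by blast
    show ?thesis unfolding z_def[abs_def] z'_def
      by (rule DERIV_mult[OF d1 d2, THEN DERIV_cong]) (simp add: algebra_simps)
  qed
  have zeq: "z' r = u r powr \<gamma> * (-1 - M*\<bar>z r\<bar> powr q - \<beta>*(z r)^2) - (real N - 1)/r * z r"
    if r: "r\<in>{a<..<b}" for r
  proof -
    define U where "U = u r"
    define Dv where "Dv = u' r"
    have U0: "U > 0" using pos[OF r] by (simp add: U_def)
    have E: "- u'' r - (real N - 1)/r * u' r = \<bar>u r\<bar> powr (p-1) * u r + M * \<bar>u' r\<bar> powr (2*p/(p+1))"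
      using D[OF r] by blast
    have aU: "\<bar>u r\<bar> = u r" using U0 by (simp add: U_def)
    have ode: "u'' r = -((real N - 1)/r * Dv) - U powr (p-1) * U - M * \<bar>Dv\<bar> powr q"
      using E[unfolded aU] unfolding U_def Dv_def q_def by linarith
    have e1: "U powr (p-1) * U * U powr (-\<beta>) = U powr \<gamma>"
    proof -
      have "U powr (p-1) * U * U powr (-\<beta>) = U powr (p-1) * U powr 1 * U powr (-\<beta>)" using U0 by simp
      also have "\<dots> = U powr ((p-1) + 1 + (-\<beta>))" by (simp only: powr_add)
      also have "(p-1)+1+(-\<beta>) = \<gamma>" by (simp add: \<beta>_def \<gamma>_def field_simps)
      finally show ?thesis .
    qed
    have e2: "\<bar>Dv\<bar> powr q * U powr (-\<beta>) = \<bar>z r\<bar> powr q * U powr \<gamma>"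
    proof -
      have "\<bar>z r\<bar> = \<bar>Dv\<bar> * U powr (-\<beta>)" by (simp add: z_def U_def Dv_def abs_mult)
      hence "\<bar>z r\<bar> powr q = \<bar>Dv\<bar> powr q * (U powr (-\<beta>)) powr q" by (simp add: powr_mult)
      also have "(U powr (-\<beta>)) powr q = U powr (-\<beta>*q)" by (rule powr_powr)
      finally have "\<bar>z r\<bar> powr q * U powr \<gamma> = \<bar>Dv\<bar> powr q * (U powr (-\<beta>*q) * U powr \<gamma>)" by simp
      also have "U powr (-\<beta>*q) * U powr \<gamma> = U powr (-\<beta>*q + \<gamma>)" by (simp only: powr_add)
      also have "-\<beta>*q + \<gamma> = -\<beta>" using assms(2) by (simp add: \<beta>_def \<gamma>_def q_def field_simps)
      finally show ?thesis by simp
    qed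
    have e3: "Dv^2 * U powr (-\<beta>-1) = (z r)^2 * U powr \<gamma>"
    proof -
      have "(z r)^2 * U powr \<gamma> = Dv^2 * (U powr (-\<beta>) * U powr (-\<beta>) * U powr \<gamma>)"
        by (simp add: z_def U_def Dv_def power2_eq_square algebra_simps)
      also have "U powr (-\<beta>) * U powr (-\<beta>) * U powr \<gamma> = U powr (-\<beta> + -\<beta> + \<gamma>)" by (simp only: powr_add)
      also have "-\<beta> + -\<beta> + \<gamma> = -\<beta>-1" by (simp add: \<beta>_def \<gamma>_def field_simps)
      finally show ?thesis by simp
    qed
    have "z' r = u'' r * U powr (-\<beta>) - \<beta> * (Dv^2 * U powr (-\<beta>-1))"
      by (simp add: z'_def U_def Dv_def power2_eq_square algebra_simps)
    also have "\<dots> = -((real N - 1)/r * (Dv * U powr (-\<beta>))) - (U powr (p-1) * U * U powr (-\<beta>))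
        - M * (\<bar>Dv\<bar> powr q * U powr (-\<beta>)) - \<beta> * ((z r)^2 * U powr \<gamma>)"
      unfolding ode e3 by (simp add: algebra_simps)
    also have "\<dots> = -((real N - 1)/r * z r) - U powr \<gamma> - M * (\<bar>z r\<bar> powr q * U powr \<gamma>) - \<beta> * ((z r)^2 * U powr \<gamma>)"
      unfolding e1 e2 by (simp add: z_def U_def Dv_def)
    finally show ?thesis by (simp add: U_def algebra_simps)
  qed
  have uz: "u' r / u r = z r * u r powr \<gamma>" if r: "r\<in>{a<..<b}" for r
  proof -
    have U0: "u r > 0" using pos[OF r] .
    have "z r * u r powr \<gamma> = u' r * (u r powr (-\<beta>) * u r powr \<gamma>)" by (simp add: z_def)
    also have "u r powr (-\<beta>) * u r powr \<gamma> = u r powr (-\<beta> + \<gamma>)" by (simp only: powr_add)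
    also have "-\<beta> + \<gamma> = -1" by (simp add: \<beta>_def \<gamma>_def field_simps)
    finally show ?thesis using U0 by (simp add: powr_minus divide_inverse)
  qed
  have zneg: "z' r \<le> -(\<delta>/2) * u r powr \<gamma> * (1+\<beta>*(z r)^2)" if ar: "a < r" "r < r1" for r
  proof -
    have r: "r \<in> {a<..<b}" using ar r1 by auto
    define A where "A = u r powr \<gamma>"
    define W where "W = 1+\<beta>*(z r)^2"
    define g where "g = -1 - M*\<bar>z r\<bar> powr q - \<beta>*(z r)^2"
    have A0: "A \<ge> K" using big[OF ar] by (simp add: A_def)
    have W1: "W \<ge> 1" using \<beta>1 by (simp add: W_def)
    have t1: "A * g \<le> A * (-\<delta>*W)" using key[of "z r"] A0 K0
      by (intro mult_left_mono) (auto simp: g_def W_def)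
    have "0 \<le> (\<bar>z r\<bar> - 1)^2" by simp
    hence "2*\<bar>z r\<bar> \<le> 1 + (z r)^2" by (simp add: power2_diff power2_abs)
    hence "\<bar>z r\<bar> \<le> 1 + (z r)^2" by simp
    also have "\<dots> \<le> W" using \<beta>1 mult_right_mono[of 1 \<beta> "(z r)^2"] by (simp add: W_def)
    finally have zW: "\<bar>z r\<bar> \<le> W" .
    have NC: "(real N - 1)/r \<le> C" "0 \<le> (real N - 1)/r"
      using assms ar by (auto simp: C_def intro!: divide_left_mono)
    have "-((real N - 1)/r * z r) \<le> (real N - 1)/r * \<bar>z r\<bar>"
      using NC(2) by (metis abs_ge_minus_self minus_mult_right mult_left_mono)
    also have "\<dots> \<le> C * W" using NC zW C0 by (meson mult_mono abs_ge_zero)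
    finally have t2: "-((real N - 1)/r * z r) \<le> C * W" .
    have "(\<delta>/2) * K = C + \<delta>/2" using \<delta>0 by (simp add: K_def field_simps)
    moreover have "(\<delta>/2) * K \<le> (\<delta>/2) * A" using A0 \<delta>0 by (intro mult_left_mono) auto
    ultimately have "C \<le> (\<delta>/2) * A" using \<delta>0 by linarith
    hence t3: "C * W \<le> (\<delta>/2) * A * W" using W1 by (intro mult_right_mono) auto
    have "z' r = A * g - (real N - 1)/r * z r" using zeq[OF r] by (simp add: A_def g_def)
    moreover have "A*(-\<delta>*W) = -(\<delta>*A*W)" "(\<delta>/2)*A*W = (\<delta>*A*W)/2" "-(\<delta>/2)*A*W = -((\<delta>*A*W)/2)" by simp_all
    ultimately have "z' r \<le> -(\<delta>/2)*A*W" using t1 t2 t3 by linarith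
    thus ?thesis by (simp only: A_def W_def)
  qed
  have zdec: "z s \<ge> z t" if "a < s" "s \<le> t" "t < r1" for s t
  proof (rule DERIV_nonpos_imp_decreasing_open[OF that(2)])
    fix x assume "s < x" "x < t"
    hence x: "a < x" "x < r1" using that by auto
    have "0 \<le> (\<delta>/2) * u x powr \<gamma> * (1+\<beta>*(z x)^2)" using \<delta>0 \<beta>1 by simp
    with zneg[OF x] have "z' x \<le> 0" by linarith
    moreover have "(z has_real_derivative z' x) (at x)" using x r1 by (intro zder) auto
    ultimately show "\<exists>y. (z has_real_derivative y) (at x) \<and> y \<le> 0" by blast
  next
    show "continuous_on {s..t} z"
      by (rule cont_from_deriv[of _ _ _ z']) (use that r1 in \<open>auto intro!: zder\<close>)
  qed
  have zle0: "z r \<le> 0" if ar: "a < r" "r < r1" for r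
  proof (rule ccontr)
    assume "\<not> z r \<le> 0"
    hence zr: "z r > 0" by simp
    have upos: "u' x > 0" if "a < x" "x \<le> r" for x
    proof -
      have "z x > 0" using zdec[of x r] that ar zr by auto
      moreover have "u x powr (-\<beta>) > 0" using pos[of x] that ar r1 by auto
      ultimately show ?thesis by (simp add: z_def zero_less_mult_iff)
    qed
    have "u s \<le> u r" if "a < s" "s < r" for s
    proof (rule DERIV_nonneg_imp_increasing_open[of s r u])
      show "s \<le> r" using that by simp
    next
      fix x assume "s < x" "x < r"
      thus "\<exists>y. (u has_real_derivative y) (at x) \<and> 0 \<le> y"
        using D[of x] upos[of x] that ar r1 by (intro exI[of _ "u' x"]) auto
    next
      show "continuous_on {s..r} u"
        by (rule cont_from_deriv[of _ _ _ u']) (use D that ar r1 in auto)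
    qed
    moreover obtain s where "a < s" "s < r" "u s > u r"
      using right_unbounded[OF lim ar(1)] by blast
    ultimately show False by force
  qed
  define \<Phi> where "\<Phi> r = (z r)^2 + \<delta> * ln (u r)" for r
  have \<Phi>der: "(\<Phi> has_real_derivative (2*z r*z' r + \<delta>*(u' r / u r))) (at r)" if r: "r\<in>{a<..<b}" for r
  proof -
    have d1: "((\<lambda>x. (z x)^2) has_real_derivative (of_nat 2 * (z' r * z r ^ (2 - Suc 0)))) (at r)"
      by (rule DERIV_power[OF zder[OF r]])
    have d2: "((\<lambda>x. ln (u x)) has_real_derivative (1 / u r * u' r)) (at r)"
      by (rule DERIV_chain'[OF _ DERIV_ln_divide]) (use D[OF r] pos[OF r] in auto)
    have "(\<Phi> has_real_derivative (of_nat 2 * (z' r * z r ^ (2 - Suc 0)) + \<delta> * (1 / u r * u' r))) (at r)"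
      unfolding \<Phi>_def[abs_def] by (intro DERIV_add d1 DERIV_cmult d2)
    thus ?thesis by (rule DERIV_cong) (simp add: algebra_simps)
  qed
  have \<Phi>nn: "2*z r*z' r + \<delta>*(u' r / u r) \<ge> 0" if ar: "a < r" "r < r1" for r
  proof -
    have r: "r \<in> {a<..<b}" using ar r1 by auto
    define A where "A = u r powr \<gamma>"
    define W where "W = 1+\<beta>*(z r)^2"
    define y where "y = - z r"
    have y0: "y \<ge> 0" using zle0[OF ar] by (simp add: y_def)
    have A0: "A \<ge> 0" by (simp add: A_def)
    have W1: "W \<ge> 1" using \<beta>1 by (simp add: W_def)
    have h: "-z' r \<ge> (\<delta>/2) * A * W" using zneg[OF ar] by (simp add: A_def W_def)
    have "2*y*(-z' r) \<ge> 2*y*((\<delta>/2) * A * W)" using h y0 by (intro mult_left_mono) auto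
    moreover have "\<delta>*y*A*W \<ge> \<delta>*y*A*1" using W1 y0 A0 \<delta>0 by (intro mult_left_mono) auto
    ultimately have "2*y*(-z' r) \<ge> \<delta>*y*A" by (simp add: algebra_simps)
    moreover have "u' r / u r = - y * A" using uz[OF r] by (simp add: y_def A_def)
    ultimately show ?thesis by (simp add: y_def algebra_simps)
  qed
  define rs where "rs = (a + r1)/2"
  have rs: "a < rs" "rs < r1" using r1 by (auto simp: rs_def)
  have bound: "u r \<le> exp (\<Phi> rs / \<delta>)" if ar: "a < r" "r < rs" for r
  proof -
    have "\<Phi> r \<le> \<Phi> rs"
    proof (rule DERIV_nonneg_imp_increasing_open[of r rs \<Phi>])
      show "r \<le> rs" using ar by simp
    next
      fix x assume "r < x" "x < rs"
      thus "\<exists>y. (\<Phi> has_real_derivative y) (at x) \<and> 0 \<le> y"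
        using \<Phi>der[of x] \<Phi>nn[of x] ar rs r1 by (intro exI[of _ "2*z x*z' x + \<delta>*(u' x / u x)"]) auto
    next
      show "continuous_on {r..rs} \<Phi>"
        by (rule cont_from_deriv[of _ _ _ "\<lambda>x. 2*z x*z' x + \<delta>*(u' x / u x)"])
           (use \<Phi>der ar rs r1 in auto)
    qed
    hence "\<delta> * ln (u r) \<le> \<Phi> rs" by (simp add: \<Phi>_def) (smt (verit) zero_le_power2)
    hence "ln (u r) \<le> \<Phi> rs / \<delta>" using \<delta>0 by (simp add: field_simps)
    moreover have "u r > 0" using pos[of r] ar rs r1 by auto
    ultimately show ?thesis by (metis exp_le_cancel_iff exp_ln)
  qed
  obtain s where "a < s" "s < rs" "u s > exp (\<Phi> rs / \<delta>)"
    using right_unbounded[OF lim rs(1)] by blast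
  with bound show False by force
qed

end
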